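(* Let $K,A,B$ be sets and let $\mathrm{null}$ be an element not in $A\cup B$. Let $S$ be the set of finite sets $s$ of triples $(k,a,b)$ with $k\in K$, $a\in A\cup\{\mathrm{null}\}$, $b\in B\cup\{\mathrm{null}\}$, such that no two distinct triples of $s$ have the same first component and no triple has $a=b=\mathrm{null}$. Let $V$ (resp. $W$) be the set of finite sets of pairs in $K\times A$ (resp. $K\times B$) in which no two distinct pairs have the same first component. Define $f:S\to V$, $f(s)=\{(k,a):(k,a,b)\in s,\ a\neq\mathrm{null}\}$ and $c:S\to W$, $c(s)=\{(k,b):(k,a,b)\in s,\ b\neq\mathrm{null}\}$. Then: (1) the map $s\mapsto (f(s),c(s))$ is a bijection $S\to V\times W$; (2) for every complete set $U$ of updates on $V$, setting $T(u)(s)$ to be the unique $s'\in S$ with $f(s')=u(f(s))$ and $c(s')=c(s)$ defines a translator $T$ for $f$; (3) for this $T$, $s\equiv s'$ implies $c(s)=c(s')$; and if moreover for all $x,y\in V$ there is $u\in U$ with $u(x)=y$, then $s\equiv s'$ if and only if $c(s)=c(s')$, so the classes of $S/{\equiv}$ are in one-to-one correspondence with $W$ (the states of the projection onto the $K$ and $B$ columns, restricted to non-null $B$).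
   Context: This models a table with key column $K$ and columns $A,B$, the view being the projection onto $(K,A)$ restricted to rows with non-null $A$. The translator $T$ in (2) corresponds to the row-level strategy: inserting $(k,a)$ in the view sets the $A$ column of the base row with key $k$ to $a$ if that row exists, and otherwise inserts $(k,a,\mathrm{null})$; deleting $(k,a)$ from the view sets the $A$ column of that base row to $\mathrm{null}$, deleting the base row if its $B$ column is also $\mathrm{null}$. Definitions: for a surjective map $f:S\to V$, a set $U$ of maps $V\to V$ is a complete set of updates if (a) $u,v\in U$ implies $v\circ u\in U$, and (b) for every $u\in U$ and $x\in V$ there is $w\in U$ with $w(u(x))=x$. A map $t:S\to S$ is a translation of $u:V\to V$ if $f\circ t=u\circ f$ and $u(f(s))=f(s)$ implies $t(s)=s$ for all $s\in S$. A translator for $f$ (with respect to a complete set $U$) assigns to each $u\in U$ a translation $T(u)$ of $u$ such that $T(u\circ v)=T(u)\circ T(v)$. The induced equivalence on $S$ is: $s\equiv s'$ iff $s=T(u)(s')$ for some $u\in U$. *)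

theory Defs
  imports Main "HOL-Library.FuncSet"
begin

definition Sset :: "'k set \<Rightarrow> 'v set \<Rightarrow> 'v set \<Rightarrow> 'v \<Rightarrow> ('k \<times> 'v \<times> 'v) set set" where
  "Sset K A B null = {s. finite s \<and> s \<subseteq> K \<times> (A \<union> {null}) \<times> (B \<union> {null})
      \<and> (\<forall>t\<in>s. \<forall>t'\<in>s. fst t = fst t' \<longrightarrow> t = t')
      \<and> (\<forall>(k,a,b)\<in>s. \<not> (a = null \<and> b = null))}"

definition Vset :: "'k set \<Rightarrow> 'v set \<Rightarrow> ('k \<times> 'v) set set" where
  "Vset K A = {x. finite x \<and> x \<subseteq> K \<times> A \<and> (\<forall>p\<in>x. \<forall>p'\<in>x. fst p = fst p' \<longrightarrow> p = p')}"

definition fmap :: "'v \<Rightarrow> ('k \<times> 'v \<times> 'v) set \<Rightarrow> ('k \<times> 'v) set" where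
  "fmap null s = {(k,a). \<exists>b. (k,a,b) \<in> s \<and> a \<noteq> null}"

definition cmap :: "'v \<Rightarrow> ('k \<times> 'v \<times> 'v) set \<Rightarrow> ('k \<times> 'v) set" where
  "cmap null s = {(k,b). \<exists>a. (k,a,b) \<in> s \<and> b \<noteq> null}"

text \<open>Maps X -> Y are represented as extensional functions (undefined off X).\<close>
definition complete_update_set :: "'x set \<Rightarrow> ('x \<Rightarrow> 'x) set \<Rightarrow> bool" where
  "complete_update_set V U \<longleftrightarrow> U \<subseteq> (V \<rightarrow>\<^sub>E V)
     \<and> (\<forall>u\<in>U. \<forall>v\<in>U. compose V v u \<in> U)
     \<and> (\<forall>u\<in>U. \<forall>x\<in>V. \<exists>w\<in>U. w (u x) = x)"

definition is_translation :: "'s set \<Rightarrow> ('s \<Rightarrow> 'x) \<Rightarrow> ('x \<Rightarrow> 'x) \<Rightarrow> ('s \<Rightarrow> 's) \<Rightarrow> bool" where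
  "is_translation S f u t \<longleftrightarrow> t \<in> (S \<rightarrow>\<^sub>E S)
     \<and> (\<forall>s\<in>S. f (t s) = u (f s))
     \<and> (\<forall>s\<in>S. u (f s) = f s \<longrightarrow> t s = s)"

definition is_translator :: "'s set \<Rightarrow> 'x set \<Rightarrow> ('s \<Rightarrow> 'x) \<Rightarrow> ('x \<Rightarrow> 'x) set
      \<Rightarrow> (('x \<Rightarrow> 'x) \<Rightarrow> ('s \<Rightarrow> 's)) \<Rightarrow> bool" where
  "is_translator S V f U T \<longleftrightarrow>
     (\<forall>u\<in>U. is_translation S f u (T u))
     \<and> (\<forall>u\<in>U. \<forall>v\<in>U. T (compose V u v) = compose S (T u) (T v))"

definition trans_equiv :: "'s set \<Rightarrow> ('x \<Rightarrow> 'x) set \<Rightarrow> (('x \<Rightarrow> 'x) \<Rightarrow> ('s \<Rightarrow> 's)) \<Rightarrow> ('s \<times> 's) set" where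
  "trans_equiv S U T = {(s, s'). s \<in> S \<and> s' \<in> S \<and> (\<exists>u\<in>U. s = T u s')}"

definition rowT :: "'k set \<Rightarrow> 'v set \<Rightarrow> 'v set \<Rightarrow> 'v
      \<Rightarrow> (('k \<times> 'v) set \<Rightarrow> ('k \<times> 'v) set) \<Rightarrow> ('k \<times> 'v \<times> 'v) set \<Rightarrow> ('k \<times> 'v \<times> 'v) set" where
  "rowT K A B null u = (\<lambda>s\<in>Sset K A B null.
      THE s'. s' \<in> Sset K A B null \<and> fmap null s' = u (fmap null s) \<and> cmap null s' = cmap null s)"

end

theory Submission
  imports Defs
begin

lemma S_fun:
  assumes "s \<in> Sset K A B null" "(k,a,b)\<in>s" "(k,a',b')\<in>s"
  shows "a=a' \<and> b=b'"
proof -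
  have "\<forall>t\<in>s. \<forall>t'\<in>s. fst t = fst t' \<longrightarrow> t = t'" using assms(1) unfolding Sset_def by blast
  then have "(k,a,b) = (k,a',b')" using assms(2,3) by (metis fst_conv)
  then show ?thesis by simp
qed

lemma S_sub:
  assumes "s \<in> Sset K A B null" "s' \<in> Sset K A B null"
    "fmap null s = fmap null s'" "cmap null s = cmap null s'"
  shows "s \<subseteq> s'"
proof
  fix t assume t: "t \<in> s"
  obtain k a b where tt: "t = (k,a,b)" by (cases t) auto
  have nn: "\<not>(a = null \<and> b = null)" using assms(1) t tt unfolding Sset_def by auto
  show "t \<in> s'"
  proof (cases "a = null")
    case False
    then have "(k,a) \<in> fmap null s" using t tt unfolding fmap_def by auto
    then have "(k,a) \<in> fmap null s'" using assms(3) by simp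
    then obtain b' where b': "(k,a,b') \<in> s'" unfolding fmap_def by auto
    show ?thesis
    proof (cases "b = null")
      case False
      then have "(k,b) \<in> cmap null s" using t tt unfolding cmap_def by auto
      then have "(k,b) \<in> cmap null s'" using assms(4) by simp
      then obtain a'' where a'': "(k,a'',b) \<in> s'" unfolding cmap_def by auto
      then show ?thesis using S_fun[OF assms(2) a'' b'] b' tt by auto
    next
      case True
      show ?thesis
      proof (cases "b' = null")
        case True then show ?thesis using b' tt \<open>b = null\<close> by auto
      next
        case False
        then have "(k,b') \<in> cmap null s" using b' assms(4) unfolding cmap_def by auto
        then obtain a0 where a0: "(k,a0,b') \<in> s" unfolding cmap_def by auto
        then have "b' = b" using S_fun[OF assms(1) a0, of a b] t tt by auto
        then show ?thesis using False True by auto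
      qed
    qed
  next
    case True
    then have bn: "b \<noteq> null" using nn by auto
    then have "(k,b) \<in> cmap null s" using t tt unfolding cmap_def by auto
    then have "(k,b) \<in> cmap null s'" using assms(4) by simp
    then obtain a' where a': "(k,a',b) \<in> s'" unfolding cmap_def by auto
    show ?thesis
    proof (cases "a' = null")
      case True then show ?thesis using a' tt \<open>a = null\<close> by auto
    next
      case False
      then have "(k,a') \<in> fmap null s" using a' assms(3) unfolding fmap_def by auto
      then obtain b0 where b0: "(k,a',b0) \<in> s" unfolding fmap_def by auto
      then have "a' = a" using S_fun[OF assms(1) b0, of a b] t tt by auto
      then show ?thesis using False True by auto
    qed
  qed
qed

lemma S_inj:
  assumes "s \<in> Sset K A B null" "s' \<in> Sset K A B null"
    "fmap null s = fmap null s'" "cmap null s = cmap null s'"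
  shows "s = s'"
  using S_sub[OF assms] S_sub[OF assms(2,1) assms(3,4)[symmetric]] by auto

definition F :: "'v \<Rightarrow> ('k \<times> 'v) set \<Rightarrow> 'k \<Rightarrow> 'v" where
  "F null x k = (if k \<in> fst ` x then THE a. (k,a) \<in> x else null)"

lemma F_in:
  assumes x: "x \<in> Vset K A" and ka: "(k,a) \<in> x"
  shows "F null x k = a"
proof -
  have fnx: "\<forall>p\<in>x. \<forall>p'\<in>x. fst p = fst p' \<longrightarrow> p = p'" using x unfolding Vset_def by blast
  have k: "k \<in> fst ` x" using ka by force
  have "(THE a'. (k,a') \<in> x) = a"
  proof (rule the_equality)
    show "(k,a) \<in> x" by fact
    fix a' assume "(k,a') \<in> x"
    then have "(k,a') = (k,a)" using fnx ka by (metis fst_conv)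
    then show "a' = a" by simp
  qed
  then show ?thesis unfolding F_def using k by simp
qed

lemma F_out: "k \<notin> fst ` x \<Longrightarrow> F null x k = null"
  unfolding F_def by auto

lemma F_mem: "x \<in> Vset K A \<Longrightarrow> (F null x k = null) \<or> (k, F null x k) \<in> x"
  by (cases "k \<in> fst ` x") (auto simp: F_out F_in)

lemma S_surj:
  fixes K :: "'k set" and A B :: "'v set" and x y :: "('k \<times> 'v) set"
  assumes nA: "null \<notin> A \<union> B" and x: "x \<in> Vset K A" and y: "y \<in> Vset K B"
  shows "\<exists>s\<in>Sset K A B null. fmap null s = x \<and> cmap null s = y"
proof -
  define s where "s = (\<lambda>k. (k, F null x k, F null y k)) ` (fst ` x \<union> fst ` y)"
  have fx: "finite x" "finite y" using x y unfolding Vset_def by auto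
  have xs: "x \<subseteq> K \<times> A" "y \<subseteq> K \<times> B" using x y unfolding Vset_def by auto
  have fa: "F null x k \<in> A \<union> {null}" for k using F_mem[OF x, where k=k] xs by auto
  have fb: "F null y k \<in> B \<union> {null}" for k using F_mem[OF y, where k=k] xs by auto
  have nz: "F null x k \<noteq> null \<or> F null y k \<noteq> null" if "k \<in> fst ` x \<union> fst ` y" for k
  proof -
    have "(\<exists>a. (k,a) \<in> x) \<or> (\<exists>b. (k,b) \<in> y)" using that by force
    then show ?thesis
    proof
      assume "\<exists>a. (k,a)\<in>x" then obtain a where ka: "(k,a)\<in>x" by blast
      then have "F null x k = a" "a \<in> A" using F_in[OF x ka] xs by auto
      then show ?thesis using nA by auto
    next
      assume "\<exists>a. (k,a)\<in>y" then obtain a where ka: "(k,a)\<in>y" by blast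
      then have "F null y k = a" "a \<in> B" using F_in[OF y ka] xs by auto
      then show ?thesis using nA by auto
    qed
  qed
  have "s \<in> Sset K A B null"
    unfolding Sset_def s_def
  proof (intro CollectI conjI)
    show "finite ((\<lambda>k. (k, F null x k, F null y k)) ` (fst ` x \<union> fst ` y))" using fx by auto
    show "(\<lambda>k. (k, F null x k, F null y k)) ` (fst ` x \<union> fst ` y) \<subseteq> K \<times> (A \<union> {null}) \<times> (B \<union> {null})"
      using xs fa fb by auto
    show "\<forall>t\<in>(\<lambda>k. (k, F null x k, F null y k)) ` (fst ` x \<union> fst ` y).
       \<forall>t'\<in>(\<lambda>k. (k, F null x k, F null y k)) ` (fst ` x \<union> fst ` y). fst t = fst t' \<longrightarrow> t = t'"
      by auto
    show "\<forall>(k, a, b)\<in>(\<lambda>k. (k, F null x k, F null y k)) ` (fst ` x \<union> fst ` y). \<not> (a = null \<and> b = null)"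
      using nz by auto
  qed
  moreover have "fmap null s = x"
  proof
    show "fmap null s \<subseteq> x" unfolding fmap_def s_def using F_mem[OF x] by auto
    show "x \<subseteq> fmap null s"
    proof
      fix p assume p: "p \<in> x"
      obtain k a where pk: "p = (k,a)" by (cases p) auto
      have "a \<noteq> null" using p pk xs nA by auto
      then show "p \<in> fmap null s" unfolding fmap_def s_def using p pk F_in[OF x p[unfolded pk]]
        by (auto simp: image_iff) (metis fst_conv image_eqI)
    qed
  qed
  moreover have "cmap null s = y"
  proof
    show "cmap null s \<subseteq> y" unfolding cmap_def s_def using F_mem[OF y] by auto
    show "y \<subseteq> cmap null s"
    proof
      fix p assume p: "p \<in> y"
      obtain k a where pk: "p = (k,a)" by (cases p) auto
      have "a \<noteq> null" using p pk xs nA by auto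
      then show "p \<in> cmap null s" unfolding cmap_def s_def using p pk F_in[OF y p[unfolded pk]]
        by (auto simp: image_iff) (metis fst_conv image_eqI)
    qed
  qed
  ultimately show ?thesis by blast
qed

lemma f_in_V: "s \<in> Sset K A B null \<Longrightarrow> fmap null s \<in> Vset K A"
proof -
  assume s: "s \<in> Sset K A B null"
  have "fmap null s = (\<lambda>(k,a,b). (k,a)) ` {t\<in>s. fst (snd t) \<noteq> null}"
    unfolding fmap_def by (auto simp: image_iff) 
  then have "finite (fmap null s)" using s unfolding Sset_def by auto
  moreover have "fmap null s \<subseteq> K \<times> A" using s unfolding Sset_def fmap_def by auto
  moreover have "\<forall>p\<in>fmap null s. \<forall>p'\<in>fmap null s. fst p = fst p' \<longrightarrow> p = p'"
    unfolding fmap_def using S_fun[OF s] by auto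
  ultimately show ?thesis unfolding Vset_def by auto
qed

lemma c_in_V: "s \<in> Sset K A B null \<Longrightarrow> cmap null s \<in> Vset K B"
proof -
  assume s: "s \<in> Sset K A B null"
  have "cmap null s = (\<lambda>(k,a,b). (k,b)) ` {t\<in>s. snd (snd t) \<noteq> null}"
    unfolding cmap_def by (auto simp: image_iff) 
  then have "finite (cmap null s)" using s unfolding Sset_def by auto
  moreover have "cmap null s \<subseteq> K \<times> B" using s unfolding Sset_def cmap_def by auto
  moreover have "\<forall>p\<in>cmap null s. \<forall>p'\<in>cmap null s. fst p = fst p' \<longrightarrow> p = p'"
    unfolding cmap_def using S_fun[OF s] by auto
  ultimately show ?thesis unfolding Vset_def by auto
qed


lemma ex1S:
  assumes "null \<notin> A \<union> B" "x \<in> Vset K A" "w \<in> Vset K B"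
  shows "\<exists>!s'. s' \<in> Sset K A B null \<and> fmap null s' = x \<and> cmap null s' = w"
proof -
  obtain s where s: "s \<in> Sset K A B null" "fmap null s = x" "cmap null s = w"
    using S_surj[OF assms] by blast
  show ?thesis
  proof (rule ex1I[of _ s])
    show "s \<in> Sset K A B null \<and> fmap null s = x \<and> cmap null s = w" using s by simp
    fix t assume "t \<in> Sset K A B null \<and> fmap null t = x \<and> cmap null t = w"
    then show "t = s" using S_inj[of t K A B null s] s by simp
  qed
qed

lemma rowT_prop:
  assumes "null \<notin> A \<union> B" "s \<in> Sset K A B null" "u (fmap null s) \<in> Vset K A"
  shows "rowT K A B null u s \<in> Sset K A B null \<and> fmap null (rowT K A B null u s) = u (fmap null s)
     \<and> cmap null (rowT K A B null u s) = cmap null s"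
proof -
  have "rowT K A B null u s = (THE s'. s' \<in> Sset K A B null \<and> fmap null s' = u (fmap null s) \<and> cmap null s' = cmap null s)"
    using assms(2) unfolding rowT_def by simp
  then show ?thesis using theI'[OF ex1S[OF assms(1) assms(3) c_in_V[OF assms(2)]]] by simp
qed

lemma rowT_eq:
  assumes "null \<notin> A \<union> B" "s \<in> Sset K A B null" "s' \<in> Sset K A B null"
    "fmap null s' = u (fmap null s)" "cmap null s' = cmap null s"
  shows "rowT K A B null u s = s'"
proof -
  have uV: "u (fmap null s) \<in> Vset K A" using f_in_V[OF assms(3)] assms(4) by simp
  have p: "rowT K A B null u s \<in> Sset K A B null" "fmap null (rowT K A B null u s) = u (fmap null s)"
     "cmap null (rowT K A B null u s) = cmap null s"
    using rowT_prop[where u=u, OF assms(1,2) uV] by auto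
  show ?thesis using S_inj[OF p(1) assms(3)] p(2,3) assms(4,5) by simp
qed

theorem mainTheorem4:
  fixes K :: "'k set" and A B :: "'v set" and null :: 'v
  assumes "null \<notin> A \<union> B"
  shows "bij_betw (\<lambda>s. (fmap null s, cmap null s)) (Sset K A B null) (Vset K A \<times> Vset K B)
    \<and> (\<forall>U. complete_update_set (Vset K A) U \<longrightarrow>
          is_translator (Sset K A B null) (Vset K A) (fmap null) U (rowT K A B null)
        \<and> (\<forall>s s'. (s, s') \<in> trans_equiv (Sset K A B null) U (rowT K A B null)
                  \<longrightarrow> cmap null s = cmap null s')
        \<and> ((\<forall>x\<in>Vset K A. \<forall>y\<in>Vset K A. \<exists>u\<in>U. u x = y) \<longrightarrow>
             (\<forall>s\<in>Sset K A B null. \<forall>s'\<in>Sset K A B null.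
                 (s, s') \<in> trans_equiv (Sset K A B null) U (rowT K A B null)
                 \<longleftrightarrow> cmap null s = cmap null s')
           \<and> bij_betw (\<lambda>C. the_elem (cmap null ` C))
               (Sset K A B null // trans_equiv (Sset K A B null) U (rowT K A B null))
               (Vset K B)))"
proof -
  let ?S = "Sset K A B null" and ?V = "Vset K A" and ?W = "Vset K B"
  let ?T = "rowT K A B null"
  have nA: "null \<notin> A \<union> B" by fact
  have P1: "bij_betw (\<lambda>s. (fmap null s, cmap null s)) ?S (?V \<times> ?W)"
    unfolding bij_betw_def
  proof
    show "inj_on (\<lambda>s. (fmap null s, cmap null s)) ?S"
    proof (rule inj_onI)
      fix x y assume "x \<in> ?S" "y \<in> ?S" "(fmap null x, cmap null x) = (fmap null y, cmap null y)"
      then show "x = y" using S_inj[of x K A B null y] by simp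
    qed
    show "(\<lambda>s. (fmap null s, cmap null s)) ` ?S = ?V \<times> ?W"
    proof
      show "(\<lambda>s. (fmap null s, cmap null s)) ` ?S \<subseteq> ?V \<times> ?W" using f_in_V[of _ K A B null] c_in_V[of _ K A B null] by auto
      show "?V \<times> ?W \<subseteq> (\<lambda>s. (fmap null s, cmap null s)) ` ?S"
      proof
        fix p assume "p \<in> ?V \<times> ?W"
        then obtain x w where p: "p = (x,w)" "x \<in> ?V" "w \<in> ?W" by blast
        then obtain s where "s \<in> ?S" "fmap null s = x" "cmap null s = w" using S_surj[OF nA] by blast
        then show "p \<in> (\<lambda>s. (fmap null s, cmap null s)) ` ?S" using p by force
      qed
    qed
  qed
  have P2: "is_translator ?S ?V (fmap null) U ?T
        \<and> (\<forall>s s'. (s, s') \<in> trans_equiv ?S U ?T \<longrightarrow> cmap null s = cmap null s')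
        \<and> ((\<forall>x\<in>?V. \<forall>y\<in>?V. \<exists>u\<in>U. u x = y) \<longrightarrow>
             (\<forall>s\<in>?S. \<forall>s'\<in>?S. (s, s') \<in> trans_equiv ?S U ?T \<longleftrightarrow> cmap null s = cmap null s')
           \<and> bij_betw (\<lambda>C. the_elem (cmap null ` C)) (?S // trans_equiv ?S U ?T) ?W)"
    if cU: "complete_update_set ?V U" for U
  proof -
    have uV: "u x \<in> ?V" if "u \<in> U" "x \<in> ?V" for u x
      using cU that unfolding complete_update_set_def by (meson PiE_mem subsetD)
    have compU: "compose ?V u v \<in> U" if "u \<in> U" "v \<in> U" for u v
      using cU that unfolding complete_update_set_def by blast
    have Tp: "?T u s \<in> ?S \<and> fmap null (?T u s) = u (fmap null s) \<and> cmap null (?T u s) = cmap null s"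
      if "u \<in> U" "s \<in> ?S" for u s
      using rowT_prop[where u=u, OF nA that(2) uV[OF that(1) f_in_V[OF that(2)]]] .
    have tr: "is_translator ?S ?V (fmap null) U ?T"
      unfolding is_translator_def
    proof (intro conjI ballI)
      fix u assume u: "u \<in> U"
      show "is_translation ?S (fmap null) u (?T u)"
        unfolding is_translation_def
      proof (intro conjI ballI impI)
        show "?T u \<in> ?S \<rightarrow>\<^sub>E ?S"
          unfolding rowT_def restrict_PiE
        proof
          fix s assume s: "s \<in> ?S"
          show "(THE s'. s' \<in> ?S \<and> fmap null s' = u (fmap null s) \<and> cmap null s' = cmap null s) \<in> ?S"
            using Tp[OF u s] s unfolding rowT_def by simp
        qed
        show "fmap null (?T u s) = u (fmap null s)" if "s \<in> ?S" for s using Tp[OF u that] by simp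
        show "?T u s = s" if "s \<in> ?S" "u (fmap null s) = fmap null s" for s
          using rowT_eq[OF nA that(1) that(1)] that(2) by simp
      qed
    next
      fix u v assume u: "u \<in> U" and v: "v \<in> U"
      show "?T (compose ?V u v) = compose ?S (?T u) (?T v)"
      proof
        fix s show "?T (compose ?V u v) s = compose ?S (?T u) (?T v) s"
        proof (cases "s \<in> ?S")
          case False then show ?thesis unfolding rowT_def compose_def by simp
        next
          case True
          have fs: "fmap null s \<in> ?V" using f_in_V[OF True] .
          have e: "compose ?S (?T u) (?T v) s = ?T u (?T v s)" using True unfolding compose_def by simp
          have vs: "?T v s \<in> ?S" using Tp[OF v True] by simp
          have "?T (compose ?V u v) s = ?T u (?T v s)"
            apply (rule rowT_eq[OF nA True])
            using Tp[OF u vs] Tp[OF v True] fs unfolding compose_def by auto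
          then show ?thesis using e by simp
        qed
      qed
    qed
    have eq1: "cmap null s = cmap null s'" if st: "(s, s') \<in> trans_equiv ?S U ?T" for s s'
    proof -
      obtain u where "u \<in> U" "s' \<in> ?S" "s = ?T u s'" using st unfolding trans_equiv_def by blast
      then show ?thesis using Tp by simp
    qed
    have P3: "(\<forall>s\<in>?S. \<forall>s'\<in>?S. (s, s') \<in> trans_equiv ?S U ?T \<longleftrightarrow> cmap null s = cmap null s')
           \<and> bij_betw (\<lambda>C. the_elem (cmap null ` C)) (?S // trans_equiv ?S U ?T) ?W"
      if tt: "\<forall>x\<in>?V. \<forall>y\<in>?V. \<exists>u\<in>U. u x = y"
    proof -
      have iff: "(s, s') \<in> trans_equiv ?S U ?T \<longleftrightarrow> cmap null s = cmap null s'"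
        if s: "s \<in> ?S" and s': "s' \<in> ?S" for s s'
      proof
        assume "cmap null s = cmap null s'"
        moreover obtain u where u: "u \<in> U" "u (fmap null s') = fmap null s"
          using tt f_in_V[OF s] f_in_V[OF s'] by blast
        ultimately have "?T u s' = s" using rowT_eq[OF nA s' s] by simp
        then show "(s, s') \<in> trans_equiv ?S U ?T" unfolding trans_equiv_def using s s' u by auto
      qed (rule eq1)
      define r where "r = trans_equiv ?S U ?T"
      have cls: "r `` {s} = {s' \<in> ?S. cmap null s' = cmap null s}" if s: "s \<in> ?S" for s
        using iff[OF s] s unfolding r_def by (auto simp: trans_equiv_def)
      have te: "the_elem (cmap null ` (r `` {s})) = cmap null s" if s: "s \<in> ?S" for s
      proof -
        have "cmap null ` (r `` {s}) = {cmap null s}" using cls[OF s] s by auto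
        then show ?thesis by simp
      qed
      have bij: "bij_betw (\<lambda>C. the_elem (cmap null ` C)) (?S // r) ?W"
        unfolding bij_betw_def
      proof
        show "inj_on (\<lambda>C. the_elem (cmap null ` C)) (?S // r)"
        proof (rule inj_onI)
          fix C D assume C: "C \<in> ?S // r" and D: "D \<in> ?S // r"
            and e: "the_elem (cmap null ` C) = the_elem (cmap null ` D)"
          obtain s where s: "s \<in> ?S" "C = r``{s}" using C by (rule quotientE) auto
          obtain t where t: "t \<in> ?S" "D = r``{t}" using D by (rule quotientE) auto
          have "cmap null s = cmap null t" using e te s t by simp
          then show "C = D" using cls s t by simp
        qed
        show "(\<lambda>C. the_elem (cmap null ` C)) ` (?S // r) = ?W"
        proof
          show "(\<lambda>C. the_elem (cmap null ` C)) ` (?S // r) \<subseteq> ?W"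
          proof
            fix w assume "w \<in> (\<lambda>C. the_elem (cmap null ` C)) ` (?S // r)"
            then obtain C where C: "C \<in> ?S // r" "w = the_elem (cmap null ` C)" by blast
            obtain s where s: "s \<in> ?S" "C = r``{s}" using C(1) by (rule quotientE) auto
            show "w \<in> ?W" using C(2) s te c_in_V by simp
          qed
          show "?W \<subseteq> (\<lambda>C. the_elem (cmap null ` C)) ` (?S // r)"
          proof
            fix w assume w: "w \<in> ?W"
            have "{} \<in> ?V" unfolding Vset_def by simp
            then obtain s where s: "s \<in> ?S" "cmap null s = w" using S_surj[OF nA _ w] by blast
            have "r``{s} \<in> ?S // r" using s(1) by (rule quotientI)
            moreover have "w = the_elem (cmap null ` (r``{s}))" using te s by simp
            ultimately show "w \<in> (\<lambda>C. the_elem (cmap null ` C)) ` (?S // r)" by blast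
          qed
        qed
      qed
      show ?thesis using iff bij unfolding r_def by blast
    qed
    show ?thesis using tr eq1 P3 by blast
  qed
  show ?thesis
    apply (rule conjI[OF P1])
    apply (intro allI impI)
    apply (erule P2)
    done
qed

end
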